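(* Forgetting the rack structure on the domain defines a one-to-one correspondence between crossed modules of racks and generalized augmented racks. Explicitly: if $\mu:X\to R$ is a crossed module of racks, then $(R,X,\mu)$, with $X$ regarded merely as an $R$-set, is a generalized augmented rack; conversely, if $(R,X,p)$ is a generalized augmented rack, then $X$ with the operation $x\lhd y:=x\cdot p(y)$ is a rack and $p:X\to R$, together with the given action of $R$ on $X$, is a crossed module of racks; and these two constructions are mutually inverse.
   Context: A (right) rack is a set $X$ with a binary operation $(x,y)\mapsto x\lhd y$ such that each map $x\mapsto x\lhd y$ is a bijection of $X$ and $(x\lhd y)\lhd z=(x\lhd z)\lhd(y\lhd z)$ for all $x,y,z\in X$. A morphism of racks is a map $\mu$ with $\mu(r\lhd r')=\mu(r)\lhd\mu(r')$. If $R$ is a rack and $X$ a set, an action of $R$ on $X$ (making $X$ an $R$-set, or $R$-module) is a family of bijections $x\mapsto x\cdot r$ of $X$, one for each $r\in R$, such that $(x\cdot r)\cdot r'=(x\cdot r')\cdot(r\lhd r')$ for all $x\in X$, $r,r'\in R$. If $X$ is itself a rack, the action is by automorphisms if moreover $(x\lhd x')\cdot r=(x\cdot r)\lhd(x'\cdot r)$. A crossed module of racks is a morphism of racks $\mu:R\to S$ together with an action of $S$ on $R$ by automorphisms such that (1) $\mu(r\cdot s)=\mu(r)\lhd s$ for all $r\in R$, $s\in S$, and (2) (Peiffer identity) $r\cdot\mu(r')=r\lhd r'$ for all $r,r'\in R$. A generalized augmented rack is a triple $(R,X,p)$ where $R$ is a rack, $X$ is an $R$-set, and $p:X\to R$ is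 a map with $p(x\cdot r)=p(x)\lhd r$ for all $x\in X$, $r\in R$. *)

theory Defs
  imports Main
begin

text \<open>Racks are modelled on whole types: a rack structure on type 'a is a binary operation.\<close>

definition rack :: "('a \<Rightarrow> 'a \<Rightarrow> 'a) \<Rightarrow> bool" where
  "rack op \<longleftrightarrow> (\<forall>y. bij (\<lambda>x. op x y)) \<and>
     (\<forall>x y z. op (op x y) z = op (op x z) (op y z))"

definition rack_morphism :: "('a \<Rightarrow> 'a \<Rightarrow> 'a) \<Rightarrow> ('b \<Rightarrow> 'b \<Rightarrow> 'b) \<Rightarrow> ('a \<Rightarrow> 'b) \<Rightarrow> bool" where
  "rack_morphism opA opB f \<longleftrightarrow> (\<forall>r r'. f (opA r r') = opB (f r) (f r'))"

definition rack_action :: "('r \<Rightarrow> 'r \<Rightarrow> 'r) \<Rightarrow> ('x \<Rightarrow> 'r \<Rightarrow> 'x) \<Rightarrow> bool" where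
  "rack_action opR act \<longleftrightarrow> (\<forall>r. bij (\<lambda>x. act x r)) \<and>
     (\<forall>x r r'. act (act x r) r' = act (act x r') (opR r r'))"

definition rack_action_by_aut :: "('r \<Rightarrow> 'r \<Rightarrow> 'r) \<Rightarrow> ('x \<Rightarrow> 'x \<Rightarrow> 'x) \<Rightarrow> ('x \<Rightarrow> 'r \<Rightarrow> 'x) \<Rightarrow> bool" where
  "rack_action_by_aut opR opX act \<longleftrightarrow> rack_action opR act \<and>
     (\<forall>x x' r. act (opX x x') r = opX (act x r) (act x' r))"

definition crossed_module ::
  "('r \<Rightarrow> 'r \<Rightarrow> 'r) \<Rightarrow> ('s \<Rightarrow> 's \<Rightarrow> 's) \<Rightarrow> ('r \<Rightarrow> 's) \<Rightarrow> ('r \<Rightarrow> 's \<Rightarrow> 'r) \<Rightarrow> bool" where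
  "crossed_module opR opS mu act \<longleftrightarrow> rack opR \<and> rack opS \<and> rack_morphism opR opS mu \<and>
     rack_action_by_aut opS opR act \<and>
     (\<forall>r s. mu (act r s) = opS (mu r) s) \<and>
     (\<forall>r r'. act r (mu r') = opR r r')"

definition gen_aug_rack :: "('r \<Rightarrow> 'r \<Rightarrow> 'r) \<Rightarrow> ('x \<Rightarrow> 'r \<Rightarrow> 'x) \<Rightarrow> ('x \<Rightarrow> 'r) \<Rightarrow> bool" where
  "gen_aug_rack opR act p \<longleftrightarrow> rack opR \<and> rack_action opR act \<and>
     (\<forall>x r. p (act x r) = opR (p x) r)"

end

theory Submission
  imports Defs
begin

theorem mainTheorem1:
  fixes opR :: "'r \<Rightarrow> 'r \<Rightarrow> 'r" and act :: "'x \<Rightarrow> 'r \<Rightarrow> 'x" and p :: "'x \<Rightarrow> 'r"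
  shows "(\<forall>opX. crossed_module opX opR p act \<longrightarrow> gen_aug_rack opR act p)
    \<and> (gen_aug_rack opR act p \<longrightarrow> rack (\<lambda>x y. act x (p y))
          \<and> crossed_module (\<lambda>x y. act x (p y)) opR p act)
    \<and> (\<forall>opX. crossed_module opX opR p act \<longrightarrow> opX = (\<lambda>x y. act x (p y)))"
proof (intro conjI allI impI)
  fix opX assume "crossed_module opX opR p act"
  then show "gen_aug_rack opR act p"
    unfolding crossed_module_def gen_aug_rack_def rack_action_by_aut_def by blast
next
  fix opX assume "crossed_module opX opR p act"
  then show "opX = (\<lambda>x y. act x (p y))"
    unfolding crossed_module_def by (auto intro!: ext)
next
  assume g: "gen_aug_rack opR act p"
  hence R: "rack opR" and A: "rack_action opR act" and P: "\<And>x r. p (act x r) = opR (p x) r"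
    unfolding gen_aug_rack_def by auto
  from A have B: "\<And>r. bij (\<lambda>x. act x r)" and C: "\<And>x r r'. act (act x r) r' = act (act x r') (opR r r')"
    unfolding rack_action_def by auto
  show RX: "rack (\<lambda>x y. act x (p y))"
    unfolding rack_def using B C P by metis
  show "crossed_module (\<lambda>x y. act x (p y)) opR p act"
    unfolding crossed_module_def rack_morphism_def rack_action_by_aut_def
    using RX R A C P by metis
qed

end
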